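(* Let $T$ be a rooted binary tree in which every internal node has exactly two children, with $n\ge1$ leaves. Let $E$ be the set of all seed letters of $T$ (subsets of nodes containing all leaves and closed under taking descendants), and let $\mathcal{I}\subseteq 2^E$ be the family of hierarchical seed alphabets, i.e. subsets $X\subseteq E$ totally ordered by inclusion. Then $\mathcal{I}$ is a constrained independence system, namely: (i) $\emptyset\in\mathcal{I}$; (ii) if $X\in\mathcal{I}$ and $Y\subseteq X$ then $Y\in\mathcal{I}$; (iii) if $X,Y\in\mathcal{I}$ with $|Y|<|X|$, then there exists $e\in E\setminus Y$ with $Y\cup\{e\}\in\mathcal{I}$; (iv) every inclusion-minimal set in $2^E\setminus\mathcal{I}$ has cardinality exactly two. *)

theory Defs
  imports Main "HOL-Library.Sublist"
begin

text \<open>A tree has at least one leaf automatically. Nodes are addressed by their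
  path from the root (False = left child, True = right child).\<close>
datatype btree = Leaf | Node btree btree

fun nodes :: "btree \<Rightarrow> bool list set" where
  "nodes Leaf = {[]}"
| "nodes (Node l r) = insert [] (Cons False ` nodes l \<union> Cons True ` nodes r)"

fun leaves :: "btree \<Rightarrow> bool list set" where
  "leaves Leaf = {[]}"
| "leaves (Node l r) = Cons False ` leaves l \<union> Cons True ` leaves r"

text \<open>w is a descendant of v (reflexively) iff the path of v is a prefix of the path of w.\<close>
definition seed_letter :: "btree \<Rightarrow> bool list set \<Rightarrow> bool" where
  "seed_letter T S \<longleftrightarrow> S \<subseteq> nodes T \<and> leaves T \<subseteq> S \<and>
     (\<forall>v\<in>S. \<forall>w\<in>nodes T. prefix v w \<longrightarrow> w \<in> S)"

definition seed_letters :: "btree \<Rightarrow> bool list set set" where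
  "seed_letters T = {S. seed_letter T S}"

definition hierarchical :: "btree \<Rightarrow> bool list set set \<Rightarrow> bool" where
  "hierarchical T X \<longleftrightarrow> X \<subseteq> seed_letters T \<and> (\<forall>A\<in>X. \<forall>B\<in>X. A \<subseteq> B \<or> B \<subseteq> A)"

definition hier_alphabets :: "btree \<Rightarrow> bool list set set set" where
  "hier_alphabets T = {X. hierarchical T X}"

end

theory Submission
  imports Defs
begin

lemma finite_nodes: "finite (nodes T)"
  by (induction T) auto

lemma leaves_sub: "leaves T \<subseteq> nodes T"
  by (induction T) auto

lemma leaf_prefix: "v \<in> leaves T \<Longrightarrow> w \<in> nodes T \<Longrightarrow> prefix v w \<Longrightarrow> w = v"
proof (induction T arbitrary: v w)
  case Leaf
  then show ?case by auto
next
  case (Node l r)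
  then show ?case by (auto simp: Cons_prefix_Cons)
qed

lemma seed_leaves: "seed_letter T (leaves T)"
  unfolding seed_letter_def using leaves_sub leaf_prefix by blast

lemma seed_nodes: "seed_letter T (nodes T)"
  unfolding seed_letter_def using leaves_sub by blast

lemma seed_finite: "seed_letter T S \<Longrightarrow> finite S"
  unfolding seed_letter_def using finite_nodes finite_subset by blast

lemma step:
  assumes S: "seed_letter T S" and S': "seed_letter T S'" and sub: "S \<subset> S'"
  shows "\<exists>v\<in>S'-S. seed_letter T (insert v S)"
proof -
  have fin: "finite (S' - S)" using seed_finite[OF S'] by auto
  have ne: "S' - S \<noteq> {}" using sub by auto
  define m where "m = Max (length ` (S' - S))"
  have "m \<in> length ` (S' - S)" unfolding m_def using fin ne by auto
  then obtain v where v: "v \<in> S' - S" "length v = m" by auto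
  have mx: "\<And>w. w \<in> S' - S \<Longrightarrow> length w \<le> m" unfolding m_def using fin by auto
  have "seed_letter T (insert v S)"
    unfolding seed_letter_def
  proof (intro conjI ballI impI)
    show "insert v S \<subseteq> nodes T" using S S' v unfolding seed_letter_def by auto
    show "leaves T \<subseteq> insert v S" using S unfolding seed_letter_def by auto
  next
    fix u w assume u: "u \<in> insert v S" and w: "w \<in> nodes T" and p: "prefix u w"
    show "w \<in> insert v S"
    proof (cases "u = v")
      case False
      then have "u \<in> S" using u by auto
      then show ?thesis using S w p unfolding seed_letter_def by auto
    next
      case True
      have "w \<in> S'" using S' v w p True unfolding seed_letter_def by auto
      show ?thesis
      proof (rule ccontr)
        assume "w \<notin> insert v S"
        then have "w \<in> S' - S" "w \<noteq> v" using \<open>w \<in> S'\<close> by auto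
        then have "length w \<le> m" using mx by auto
        moreover have "length v < length w" using p True \<open>w \<noteq> v\<close>
          by (metis prefix_length_less prefix_order.dual_order.not_eq_order_implies_strict)
        ultimately show False using v by auto
      qed
    qed
  qed
  then show ?thesis using v by auto
qed

lemma seed_between: "seed_letter T S \<Longrightarrow> leaves T \<subseteq> S \<and> S \<subseteq> nodes T"
  unfolding seed_letter_def by auto

lemma part3:
  assumes X: "hierarchical T X" and Y: "hierarchical T Y" and c: "card Y < card X"
  shows "\<exists>e \<in> seed_letters T - Y. hierarchical T (Y \<union> {e})"
proof -
  let ?L = "leaves T" and ?N = "nodes T"
  have YE: "\<And>A. A \<in> Y \<Longrightarrow> seed_letter T A" using Y unfolding hierarchical_def seed_letters_def by auto
  have XE: "\<And>A. A \<in> X \<Longrightarrow> seed_letter T A" using X unfolding hierarchical_def seed_letters_def by auto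
  have Ych: "\<And>A B. A \<in> Y \<Longrightarrow> B \<in> Y \<Longrightarrow> A \<subseteq> B \<or> B \<subseteq> A" using Y unfolding hierarchical_def by auto
  have Xch: "\<And>A B. A \<in> X \<Longrightarrow> B \<in> X \<Longrightarrow> A \<subseteq> B \<or> B \<subseteq> A" using X unfolding hierarchical_def by auto
  have finE: "finite (seed_letters T)"
  proof -
    have "seed_letters T \<subseteq> Pow ?N" unfolding seed_letters_def seed_letter_def by auto
    then show ?thesis using finite_nodes finite_subset by blast
  qed
  have finY: "finite Y" using Y finE unfolding hierarchical_def using finite_subset by blast
  have finX: "finite X" using X finE unfolding hierarchical_def using finite_subset by blast
  have add: "hierarchical T (Y \<union> {e})" if e: "seed_letter T e" and cmp: "\<forall>A\<in>Y. A \<subseteq> e \<or> e \<subseteq> A" for e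
    using Y e cmp unfolding hierarchical_def seed_letters_def by blast
  show ?thesis
  proof (cases "?L \<in> Y")
    case False
    then show ?thesis using add[OF seed_leaves] seed_leaves seed_between YE
      unfolding seed_letters_def by blast
  next
    case L: True
    show ?thesis
    proof (cases "?N \<in> Y")
      case False
      then show ?thesis using add[OF seed_nodes] seed_nodes seed_between YE
        unfolding seed_letters_def by blast
    next
      case N: True
      have injX: "inj_on card X"
      proof (rule inj_onI)
        fix A B assume "A \<in> X" "B \<in> X" "card A = card B"
        then show "A = B" using Xch[of A B] seed_finite XE
          by (metis card_subset_eq)
      qed
      have cX: "card ` X \<subseteq> {card ?L..card ?N}"
      proof
        fix k assume "k \<in> card ` X"
        then obtain A where "A \<in> X" "k = card A" by auto
        then have "?L \<subseteq> A" "A \<subseteq> ?N" using XE seed_between by auto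
        then show "k \<in> {card ?L..card ?N}" using \<open>k = card A\<close> finite_nodes
          by (meson atLeastAtMost_iff card_mono finite_subset)
      qed
      have "\<exists>c\<in>{card ?L..card ?N}. c \<notin> card ` Y"
      proof (rule ccontr)
        assume "\<not> ?thesis"
        then have "{card ?L..card ?N} \<subseteq> card ` Y" by auto
        then have "card {card ?L..card ?N} \<le> card (card ` Y)" using finY by (meson card_mono finite_imageI)
        also have "\<dots> \<le> card Y" using card_image_le finY by blast
        finally have "card {card ?L..card ?N} \<le> card Y" .
        moreover have "card X = card (card ` X)" using injX card_image by metis
        moreover have "card (card ` X) \<le> card {card ?L..card ?N}" using cX by (meson card_mono finite_atLeastAtMost)
        ultimately show False using c by auto
      qed
      then obtain c where cI: "card ?L \<le> c" "c \<le> card ?N" and cn: "c \<notin> card ` Y" by auto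
      have cL: "card ?L < c" using cI cn L by (metis image_eqI le_neq_implies_less)
      have cN: "c < card ?N" using cI cn N by (metis image_eqI le_neq_implies_less)
      define Yl where "Yl = {A\<in>Y. card A < c}"
      define Yh where "Yh = {A\<in>Y. c < card A}"
      have "card ` Yl \<noteq> {}" "finite (card ` Yl)" using L cL finY unfolding Yl_def by auto
      then have "Max (card ` Yl) \<in> card ` Yl" by simp
      then obtain A where A: "A \<in> Yl" "card A = Max (card ` Yl)" by auto
      have Amax: "\<And>C. C \<in> Yl \<Longrightarrow> card C \<le> card A" using A finY unfolding Yl_def by auto
      have "card ` Yh \<noteq> {}" "finite (card ` Yh)" using N cN finY unfolding Yh_def by auto
      then have "Min (card ` Yh) \<in> card ` Yh" by simp
      then obtain B where B: "B \<in> Yh" "card B = Min (card ` Yh)" by auto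
      have Bmin: "\<And>C. C \<in> Yh \<Longrightarrow> card B \<le> card C" using B finY unfolding Yh_def by auto
      have AY: "A \<in> Y" "card A < c" and BY: "B \<in> Y" "c < card B" using A B unfolding Yl_def Yh_def by auto
      have sA: "seed_letter T A" and sB: "seed_letter T B" using AY BY YE by auto
      have "A \<subseteq> B"
      proof -
        have "\<not> B \<subseteq> A"
        proof
          assume "B \<subseteq> A"
          then have "card B \<le> card A" using card_mono seed_finite[OF sA] by blast
          then show False using AY BY by linarith
        qed
        then show ?thesis using Ych AY BY by blast
      qed
      moreover have "A \<noteq> B" using AY BY by auto
      ultimately have "A \<subset> B" by auto
      from step[OF sA sB this] obtain v where v: "v \<in> B - A" and sN: "seed_letter T (insert v A)" by auto
      have cardN: "card (insert v A) = card A + 1" using v seed_finite[OF sA] by auto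
      have notin: "insert v A \<notin> Y"
      proof
        assume "insert v A \<in> Y"
        moreover have "card (insert v A) \<le> c" using cardN AY by auto
        moreover have "card (insert v A) \<noteq> c" using cn \<open>insert v A \<in> Y\<close> by blast
        ultimately have "insert v A \<in> Yl" unfolding Yl_def by simp
        then have "card (insert v A) \<le> card A" using Amax by blast
        then show False using cardN by simp
      qed
      have cmp: "\<forall>C\<in>Y. C \<subseteq> insert v A \<or> insert v A \<subseteq> C"
      proof
        fix C assume CY: "C \<in> Y"
        have sC: "seed_letter T C" using CY YE by auto
        show "C \<subseteq> insert v A \<or> insert v A \<subseteq> C"
        proof (cases "C \<subseteq> A")
          case True then show ?thesis by auto
        next
          case False
          then have AC: "A \<subset> C" using Ych[OF CY AY(1)] by auto
          then have "card A < card C" using seed_finite[OF sC] psubset_card_mono by blast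
          then have "c < card C"
            using Amax[of C] CY cn unfolding Yl_def
            by (metis (mono_tags, lifting) image_eqI linorder_neqE_nat mem_Collect_eq not_le)
          then have "card B \<le> card C" using Bmin CY unfolding Yh_def by auto
          then have "B \<subseteq> C" using Ych[OF CY BY(1)] seed_finite[OF sB]
            by (metis card_seteq order_refl)
          then show ?thesis using v AC by auto
        qed
      qed
      show ?thesis using add[OF sN cmp] notin sN unfolding seed_letters_def by auto
    qed
  qed
qed

theorem mainTheorem3:
  fixes T :: btree
  defines "E \<equiv> seed_letters T" and "\<I> \<equiv> hier_alphabets T"
  shows "{} \<in> \<I>
    \<and> (\<forall>X Y. X \<in> \<I> \<and> Y \<subseteq> X \<longrightarrow> Y \<in> \<I>)
    \<and> (\<forall>X Y. X \<in> \<I> \<and> Y \<in> \<I> \<and> card Y < card X \<longrightarrow> (\<exists>e \<in> E - Y. Y \<union> {e} \<in> \<I>))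
    \<and> (\<forall>X. X \<subseteq> E \<and> X \<notin> \<I> \<and> (\<forall>Y. Y \<subset> X \<longrightarrow> Y \<in> \<I>) \<longrightarrow> card X = 2)"
proof (intro conjI allI impI)
  show "{} \<in> \<I>" unfolding \<I>_def hier_alphabets_def hierarchical_def by auto
next
  fix X Y assume "X \<in> \<I> \<and> Y \<subseteq> X"
  then show "Y \<in> \<I>" unfolding \<I>_def hier_alphabets_def hierarchical_def by blast
next
  fix X Y assume "X \<in> \<I> \<and> Y \<in> \<I> \<and> card Y < card X"
  then show "\<exists>e \<in> E - Y. Y \<union> {e} \<in> \<I>" using part3
    unfolding \<I>_def E_def hier_alphabets_def by auto
next
  fix X assume H: "X \<subseteq> E \<and> X \<notin> \<I> \<and> (\<forall>Y. Y \<subset> X \<longrightarrow> Y \<in> \<I>)"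
  have "\<not> (\<forall>A\<in>X. \<forall>B\<in>X. A \<subseteq> B \<or> B \<subseteq> A)"
    using H unfolding \<I>_def E_def hier_alphabets_def hierarchical_def by simp
  then obtain A B where AB: "A \<in> X" "B \<in> X" "\<not> A \<subseteq> B" "\<not> B \<subseteq> A"
    by blast
  have "{A, B} \<notin> \<I>" using AB unfolding \<I>_def hier_alphabets_def hierarchical_def by auto
  then have "\<not> {A, B} \<subset> X" using H by blast
  then have "X = {A, B}" using AB by auto
  moreover have "A \<noteq> B" using AB by auto
  ultimately show "card X = 2" by auto
qed

end
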